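(* For $d,n\in\mathbb{N}$, let $h_c=h_c(d,n)$ be the smallest positive integer with the following property: whenever $\mathcal{F}_1,\dots,\mathcal{F}_{h_c}$ are collections of axis-parallel boxes in $\mathbb{R}^d$ such that every colorful $h_c$-tuple is $n$-pierceable, there exists $i\in[h_c]$ such that $\mathcal{F}_i$ is $n$-pierceable. Then (1) $h_c(1,n)=n+1$ for all $n\in\mathbb{N}$, and (2) $h_c(d,2)=3d$ for all $d\in\mathbb{N}$.
   Context: An axis-parallel box in $\mathbb{R}^d$ is a set $[\alpha_1,\beta_1]\times\dots\times[\alpha_d,\beta_d]$ with $\alpha_j\le\beta_j$ real (for $d=1$, a closed interval). A family $\mathcal{F}$ of subsets of $\mathbb{R}^d$ is $n$-pierceable if there is a set $A\subseteq\mathbb{R}^d$ with $|A|\le n$ such that $F\cap A\neq\emptyset$ for every $F\in\mathcal{F}$. Given families $\mathcal{F}_1,\dots,\mathcal{F}_m$, a colorful $t$-tuple is a tuple $(C_1,\dots,C_t)$ such that for each $j\in[t]$ there is $i_j\in[m]$ with $C_j\in\mathcal{F}_{i_j}$, and $i_j\neq i_k$ for $j\neq k$. $[m]=\{1,\dots,m\}$. *)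

theory Defs
  imports Complex_Main
begin

text \<open>Points of R^d are represented as functions nat => real that vanish
  at all coordinates j >= d (coordinates 0..d-1 are the d real coordinates).\<close>

definition euclid :: "nat \<Rightarrow> (nat \<Rightarrow> real) set" where
  "euclid d = {x. \<forall>j\<ge>d. x j = 0}"

definition is_box :: "nat \<Rightarrow> (nat \<Rightarrow> real) set \<Rightarrow> bool" where
  "is_box d B \<longleftrightarrow> (\<exists>a b. (\<forall>j<d. a j \<le> b j) \<and>
      B = {x \<in> euclid d. \<forall>j<d. a j \<le> x j \<and> x j \<le> b j})"

definition pierceable :: "nat \<Rightarrow> nat \<Rightarrow> (nat \<Rightarrow> real) set set \<Rightarrow> bool" where
  "pierceable d n \<F> \<longleftrightarrow> (\<exists>A. A \<subseteq> euclid d \<and> finite A \<and> card A \<le> n \<and>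
      (\<forall>F\<in>\<F>. F \<inter> A \<noteq> {}))"

definition colorful :: "(nat \<Rightarrow> 'a set) \<Rightarrow> nat \<Rightarrow> nat \<Rightarrow> (nat \<Rightarrow> 'a) \<Rightarrow> bool" where
  "colorful \<F> m t C \<longleftrightarrow> (\<exists>\<sigma>. inj_on \<sigma> {1..t} \<and> \<sigma> ` {1..t} \<subseteq> {1..m} \<and>
      (\<forall>j\<in>{1..t}. C j \<in> \<F> (\<sigma> j)))"

definition hc_property :: "nat \<Rightarrow> nat \<Rightarrow> nat \<Rightarrow> bool" where
  "hc_property d n h \<longleftrightarrow>
     (\<forall>\<F> :: nat \<Rightarrow> (nat \<Rightarrow> real) set set.
        (\<forall>i\<in>{1..h}. finite (\<F> i) \<and> (\<forall>B\<in>\<F> i. is_box d B)) \<and>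
        (\<forall>C. colorful \<F> h h C \<longrightarrow> pierceable d n (C ` {1..h}))
        \<longrightarrow> (\<exists>i\<in>{1..h}. pierceable d n (\<F> i)))"

definition hc :: "nat \<Rightarrow> nat \<Rightarrow> nat" where
  "hc d n = (LEAST h. 0 < h \<and> hc_property d n h)"

end

theory Submission
  imports Defs
begin



definition lo :: "(nat \<Rightarrow> real) set \<Rightarrow> nat \<Rightarrow> real" where
  "lo B j = Inf ((\<lambda>x. x j) ` B)"
definition hi :: "(nat \<Rightarrow> real) set \<Rightarrow> nat \<Rightarrow> real" where
  "hi B j = Sup ((\<lambda>x. x j) ` B)"

lemma box_coord_image:
  assumes "\<forall>j<d. a j \<le> b j" "j < d"
  shows "(\<lambda>x. x j) ` {x \<in> euclid d. \<forall>j<d. a j \<le> x j \<and> x j \<le> b j} = {a j..b j}"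
proof
  show "(\<lambda>x. x j) ` {x \<in> euclid d. \<forall>j<d. a j \<le> x j \<and> x j \<le> b j} \<subseteq> {a j..b j}"
    using assms by auto
  show "{a j..b j} \<subseteq> (\<lambda>x. x j) ` {x \<in> euclid d. \<forall>j<d. a j \<le> x j \<and> x j \<le> b j}"
  proof
    fix t assume t: "t \<in> {a j..b j}"
    define x where "x = (\<lambda>i. if i = j then t else if i < d then a i else 0)"
    have "x \<in> euclid d" using assms unfolding euclid_def x_def by auto
    moreover have "\<forall>i<d. a i \<le> x i \<and> x i \<le> b i" using assms t unfolding x_def by auto
    moreover have "x j = t" unfolding x_def by simp
    ultimately show "t \<in> (\<lambda>x. x j) ` {x \<in> euclid d. \<forall>j<d. a j \<le> x j \<and> x j \<le> b j}"
      by (intro image_eqI[of _ _ x]) auto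
  qed
qed

lemma box_lohi:
  assumes "is_box d B"
  shows "B = {x \<in> euclid d. \<forall>j<d. lo B j \<le> x j \<and> x j \<le> hi B j}"
    and "\<forall>j<d. lo B j \<le> hi B j"
proof -
  obtain a b where ab: "\<forall>j<d. a j \<le> b j"
    and B: "B = {x \<in> euclid d. \<forall>j<d. a j \<le> x j \<and> x j \<le> b j}"
    using assms unfolding is_box_def by blast
  have lo: "lo B j = a j" and hi: "hi B j = b j" if "j < d" for j
    using box_coord_image[OF ab that] ab that unfolding lo_def hi_def B by simp_all
  show "B = {x \<in> euclid d. \<forall>j<d. lo B j \<le> x j \<and> x j \<le> hi B j}"
    using lo hi B by auto
  show "\<forall>j<d. lo B j \<le> hi B j" using lo hi ab by auto
qed

lemma in_box_iff:
  assumes "is_box d B"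
  shows "x \<in> B \<longleftrightarrow> x \<in> euclid d \<and> (\<forall>j<d. lo B j \<le> x j \<and> x j \<le> hi B j)"
  using box_lohi(1)[OF assms] by blast

lemma disjoint_not_pierceable:
  assumes X: "\<forall>c\<in>I. X c \<in> \<F>"
    and dis: "\<forall>c\<in>I. \<forall>c'\<in>I. c \<noteq> c' \<longrightarrow> X c \<inter> X c' = {}"
    and fin: "finite I" and card: "card I > n"
  shows "\<not> pierceable d n \<F>"
proof
  assume "pierceable d n \<F>"
  then obtain A where A: "A \<subseteq> euclid d" "finite A" "card A \<le> n" "\<forall>F\<in>\<F>. F \<inter> A \<noteq> {}"
    unfolding pierceable_def by blast
  have "\<forall>c\<in>I. \<exists>x. x \<in> X c \<inter> A" using A(4) X by blast
  then obtain \<phi> where \<phi>: "\<forall>c\<in>I. \<phi> c \<in> X c \<inter> A" by (rule bchoice[elim_format]) blast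
  have "inj_on \<phi> I"
  proof (rule inj_onI)
    fix c c' assume "c \<in> I" "c' \<in> I" "\<phi> c = \<phi> c'"
    then show "c = c'"
    proof (rule_tac ccontr)
      assume c: "c \<in> I" "c' \<in> I" "\<phi> c = \<phi> c'" "c \<noteq> c'"
      then have "X c \<inter> X c' = {}" using dis by simp
      moreover have "\<phi> c \<in> X c \<inter> X c'" using \<phi> c by auto
      ultimately show False by simp
    qed
  qed
  moreover have "\<phi> ` I \<subseteq> A" using \<phi> by blast
  ultimately have "card I \<le> card A" using A(2) by (rule card_inj_on_le)
  then show False using A(3) card by simp
qed

lemma pierceable_mono:
  assumes "pierceable d n \<G>" "\<F> \<subseteq> \<G>"
  shows "pierceable d n \<F>"
proof -
  obtain A where A: "A \<subseteq> euclid d" "finite A" "card A \<le> n" "\<forall>F\<in>\<G>. F \<inter> A \<noteq> {}"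
    using assms(1) unfolding pierceable_def by auto
  have "\<forall>F\<in>\<F>. F \<inter> A \<noteq> {}" using A(4) assms(2) by auto
  then show ?thesis unfolding pierceable_def
    apply (rule_tac x=A in exI) using A(1-3) by simp
qed




lemma in_box1_iff:
  assumes "is_box 1 B"
  shows "x \<in> B \<longleftrightarrow> x \<in> euclid 1 \<and> lo B 0 \<le> x 0 \<and> x 0 \<le> hi B 0"
  using in_box_iff[OF assms] by auto

lemma empty_pierceable: "pierceable d n {}"
  unfolding pierceable_def by (rule exI[of _ "{}"]) (simp add: euclid_def)

lemma chain:
  "\<And>I G. finite I \<Longrightarrow> card I = Suc k \<Longrightarrow>
    (\<forall>c\<in>I. finite (G c) \<and> (\<forall>B\<in>G c. is_box 1 B) \<and> \<not> pierceable 1 k (G c)) \<Longrightarrow>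
    \<exists>h. (\<forall>c\<in>I. h c \<in> G c) \<and> (\<forall>c\<in>I. \<forall>c'\<in>I. c \<noteq> c' \<longrightarrow> h c \<inter> h c' = {})"
proof (induction k)
  case 0
  then obtain c where I: "I = {c}" by (metis One_nat_def card_1_singletonE)
  have "G c \<noteq> {}"
  proof
    assume "G c = {}"
    then have "pierceable 1 0 (G c)" using empty_pierceable by simp
    then show False using 0(3) I by auto
  qed
  then obtain B where "B \<in> G c" by blast
  then show ?case using I by (intro exI[of _ "\<lambda>_. B"]) auto
next
  case (Suc k)
  have ne: "G c \<noteq> {}" if "c \<in> I" for c
  proof
    assume "G c = {}"
    then have "pierceable 1 (Suc k) (G c)" using empty_pierceable by simp
    then show False using Suc.prems(3) that by auto
  qed
  define M where "M = (\<Union>c\<in>I. G c)"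
  have finM: "finite M" unfolding M_def using Suc.prems by auto
  have "I \<noteq> {}" using Suc.prems(2) by auto
  then have neM: "M \<noteq> {}" unfolding M_def using ne by auto
  define m where "m = Min ((\<lambda>B. hi B 0) ` M)"
  have "m \<in> (\<lambda>B. hi B 0) ` M" unfolding m_def using finM neM by (intro Min_in) auto
  then obtain B0 where B0M: "B0 \<in> M" and hB0: "hi B0 0 = m" by auto
  have mle: "m \<le> hi B 0" if "B \<in> M" for B unfolding m_def using finM that by (intro Min_le) auto
  obtain c0 where c0: "c0 \<in> I" "B0 \<in> G c0" using B0M unfolding M_def by auto
  define G' where "G' c = {B \<in> G c. m < lo B 0}" for c
  define I' where "I' = I - {c0}"
  have cardI': "card I' = Suc k" unfolding I'_def using Suc.prems(1,2) c0(1) by simp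
  have "\<not> pierceable 1 k (G' c)" if c: "c \<in> I'" for c
  proof
    assume "pierceable 1 k (G' c)"
    then obtain A where A: "A \<subseteq> euclid 1" "finite A" "card A \<le> k" "\<forall>F\<in>G' c. F \<inter> A \<noteq> {}"
      unfolding pierceable_def by auto
    define pm where "pm = (\<lambda>j::nat. if j = 0 then m else 0)"
    have pme: "pm \<in> euclid 1" unfolding pm_def euclid_def by auto
    have "\<forall>F\<in>G c. F \<inter> insert pm A \<noteq> {}"
    proof
      fix F assume F: "F \<in> G c"
      have cI: "c \<in> I" using c unfolding I'_def by auto
      have box: "is_box 1 F" using Suc.prems(3) cI F by auto
      show "F \<inter> insert pm A \<noteq> {}"
      proof (cases "m < lo F 0")
        case True
        then have "F \<in> G' c" unfolding G'_def using F by auto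
        then show ?thesis using A(4) by auto
      next
        case False
        have "F \<in> M" unfolding M_def using cI F by auto
        then have "m \<le> hi F 0" using mle by auto
        then have "pm \<in> F" using False pme in_box1_iff[OF box] unfolding pm_def by auto
        then show ?thesis by auto
      qed
    qed
    moreover have "insert pm A \<subseteq> euclid 1" using A(1) pme by auto
    moreover have "finite (insert pm A)" using A(2) by auto
    moreover have "card (insert pm A) \<le> Suc k"
    proof -
      have "card (insert pm A) \<le> Suc (card A)" using A(2) by (simp add: card_insert_if)
      then show ?thesis using A(3) by linarith
    qed
    ultimately have "pierceable 1 (Suc k) (G c)" unfolding pierceable_def
      by (intro exI[of _ "insert pm A"]) simp
    then show False using Suc.prems(3) c unfolding I'_def by auto
  qed
  moreover have "finite I'" unfolding I'_def using Suc.prems(1) by auto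
  moreover have "\<forall>c\<in>I'. finite (G' c) \<and> (\<forall>B\<in>G' c. is_box 1 B)"
    unfolding I'_def G'_def using Suc.prems(3) by auto
  ultimately have "\<exists>h. (\<forall>c\<in>I'. h c \<in> G' c) \<and> (\<forall>c\<in>I'. \<forall>c'\<in>I'. c \<noteq> c' \<longrightarrow> h c \<inter> h c' = {})"
    using cardI' by (intro Suc.IH) auto
  then obtain h' where h': "\<forall>c\<in>I'. h' c \<in> G' c"
    "\<forall>c\<in>I'. \<forall>c'\<in>I'. c \<noteq> c' \<longrightarrow> h' c \<inter> h' c' = {}"
    by (elim exE conjE)
  define h where "h = h'(c0 := B0)"
  have hG: "\<forall>c\<in>I. h c \<in> G c" unfolding h_def G'_def using h'(1) c0 unfolding I'_def G'_def by auto
  have disj0: "B0 \<inter> h' c = {}" if "c \<in> I'" for c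
  proof -
    have "h' c \<in> G' c" using h'(1) that by auto
    then have lo: "m < lo (h' c) 0" and hc: "h' c \<in> G c" unfolding G'_def by auto
    have b1: "is_box 1 (h' c)" using Suc.prems(3) hc that unfolding I'_def by auto
    have b0: "is_box 1 B0" using Suc.prems(3) c0 by auto
    show ?thesis
    proof (rule ccontr)
      assume "B0 \<inter> h' c \<noteq> {}"
      then obtain x where "x \<in> B0" "x \<in> h' c" by auto
      then have "x 0 \<le> hi B0 0" "lo (h' c) 0 \<le> x 0" using in_box1_iff[OF b0] in_box1_iff[OF b1] by auto
      then show False using lo hB0 by simp
    qed
  qed
  have "\<forall>c\<in>I. \<forall>c'\<in>I. c \<noteq> c' \<longrightarrow> h c \<inter> h c' = {}"
  proof (intro ballI impI)
    fix c c' assume cc: "c \<in> I" "c' \<in> I" "c \<noteq> c'"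
    show "h c \<inter> h c' = {}"
    proof (cases "c = c0")
      case True
      then have "c' \<in> I'" using cc unfolding I'_def by auto
      then show ?thesis using True disj0 cc unfolding h_def by auto
    next
      case False
      note F = False
      show ?thesis
      proof (cases "c' = c0")
        case True
        then have "c \<in> I'" using cc F unfolding I'_def by auto
        then show ?thesis using True F disj0[of c] unfolding h_def by auto
      next
        case False
        then show ?thesis using F cc h'(2) unfolding h_def I'_def by auto
      qed
    qed
  qed
  then show ?case using hG by blast
qed

lemma colorful_id: "(\<forall>j\<in>{1..t}. C j \<in> \<F> j) \<Longrightarrow> t \<le> m \<Longrightarrow> colorful \<F> m t C"
  unfolding colorful_def by (rule exI[of _ id]) auto

lemma upper1: "hc_property 1 n (Suc n)"
  unfolding hc_property_def
proof (intro allI impI)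
  fix F :: "nat \<Rightarrow> (nat \<Rightarrow> real) set set"
  assume H: "(\<forall>i\<in>{1..Suc n}. finite (F i) \<and> (\<forall>B\<in>F i. is_box 1 B)) \<and>
      (\<forall>C. colorful F (Suc n) (Suc n) C \<longrightarrow> pierceable 1 n (C ` {1..Suc n}))"
  show "\<exists>i\<in>{1..Suc n}. pierceable 1 n (F i)"
  proof (rule ccontr)
    assume "\<not> ?thesis"
    then have "\<forall>c\<in>{1..Suc n}. finite (F c) \<and> (\<forall>B\<in>F c. is_box 1 B) \<and> \<not> pierceable 1 n (F c)"
      using H by auto
    then obtain h where h: "\<forall>c\<in>{1..Suc n}. h c \<in> F c"
      "\<forall>c\<in>{1..Suc n}. \<forall>c'\<in>{1..Suc n}. c \<noteq> c' \<longrightarrow> h c \<inter> h c' = {}"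
      using chain[of "{1..Suc n}" n F] by auto
    have "colorful F (Suc n) (Suc n) h" using h(1) by (intro colorful_id) auto
    then have "pierceable 1 n (h ` {1..Suc n})" using H by auto
    moreover have "\<not> pierceable 1 n (h ` {1..Suc n})"
      by (rule disjoint_not_pierceable[of "{1..Suc n}" h]) (use h(2) in auto)
    ultimately show False by simp
  qed
qed


lemma small_pierce:
  assumes "\<forall>j\<in>{1..h}. C j \<noteq> {} \<and> C j \<subseteq> euclid d" "h \<le> n"
  shows "pierceable d n (C ` {1..h})"
proof -
  define A where "A = (\<lambda>j. SOME x. x \<in> C j) ` {1..h}"
  have mem: "(SOME x. x \<in> C j) \<in> C j" if "j \<in> {1..h}" for j
    using assms(1) that by (metis some_in_eq)
  have "A \<subseteq> euclid d" unfolding A_def using mem assms(1) by blast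
  moreover have "finite A" unfolding A_def by simp
  moreover have "card A \<le> n" unfolding A_def using assms(2)
    by (metis card_atLeastAtMost card_image_le diff_Suc_1 finite_atLeastAtMost le_trans)
  moreover have "\<forall>F\<in>C ` {1..h}. F \<inter> A \<noteq> {}"
  proof
    fix F assume "F \<in> C ` {1..h}"
    then obtain j where j: "j \<in> {1..h}" "F = C j" by auto
    then have "(SOME x. x \<in> C j) \<in> F \<inter> A" using mem unfolding A_def by auto
    then show "F \<inter> A \<noteq> {}" by auto
  qed
  ultimately show ?thesis unfolding pierceable_def by (intro exI[of _ A]) simp
qed

definition iv :: "nat \<Rightarrow> (nat \<Rightarrow> real) set" where
  "iv k = {x \<in> euclid 1. \<forall>j<1. 2 * real k \<le> x j \<and> x j \<le> 2 * real k + 1}"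

lemma iv_box: "is_box 1 (iv k)"
  unfolding is_box_def iv_def
  by (rule exI[of _ "\<lambda>_. 2 * real k"], rule exI[of _ "\<lambda>_. 2 * real k + 1"]) simp

lemma iv_ne: "iv k \<noteq> {}"
proof -
  have "(\<lambda>j::nat. if j = 0 then 2 * real k else 0) \<in> iv k" unfolding iv_def euclid_def by auto
  then show ?thesis by auto
qed

lemma iv_sub: "iv k \<subseteq> euclid 1" unfolding iv_def by auto

lemma iv_disj: "k \<noteq> k' \<Longrightarrow> iv k \<inter> iv k' = {}"
proof (rule ccontr)
  assume kk: "k \<noteq> k'" "iv k \<inter> iv k' \<noteq> {}"
  then obtain x where "x \<in> iv k" "x \<in> iv k'" by auto
  then have "2 * real k \<le> x 0" "x 0 \<le> 2 * real k + 1" "2 * real k' \<le> x 0" "x 0 \<le> 2 * real k' + 1"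
    unfolding iv_def by auto
  moreover have "k + 1 \<le> k' \<or> k' + 1 \<le> k" using kk(1) by auto
  ultimately show False by (auto simp: of_nat_add[symmetric] simp del: of_nat_add)
qed

lemma lower1:
  assumes "1 \<le> h" "h \<le> n"
  shows "\<not> hc_property 1 n h"
proof
  assume H: "hc_property 1 n h"
  define F where "F = (\<lambda>i::nat. iv ` {0..n})"
  have "(\<forall>i\<in>{1..h}. finite (F i) \<and> (\<forall>B\<in>F i. is_box 1 B))"
    unfolding F_def using iv_box by auto
  moreover have "\<forall>C. colorful F h h C \<longrightarrow> pierceable 1 n (C ` {1..h})"
  proof (intro allI impI)
    fix C assume "colorful F h h C"
    then obtain \<sigma> where "\<forall>j\<in>{1..h}. C j \<in> F (\<sigma> j)" unfolding colorful_def by auto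
    then have "\<forall>j\<in>{1..h}. C j \<noteq> {} \<and> C j \<subseteq> euclid 1"
      unfolding F_def using iv_ne iv_sub by fastforce
    then show "pierceable 1 n (C ` {1..h})" using assms(2) by (rule small_pierce)
  qed
  ultimately obtain i where i: "i \<in> {1..h}" "pierceable 1 n (F i)"
    using H unfolding hc_property_def by blast
  have "\<not> pierceable 1 n (iv ` {0..n})"
    by (rule disjoint_not_pierceable[of "{0..n}" iv]) (use iv_disj in auto)
  then show False using i unfolding F_def by simp
qed

lemma hc1: assumes "1 \<le> n" shows "hc 1 n = n + 1"
  unfolding hc_def
proof (rule Least_equality)
  show "0 < n + 1 \<and> hc_property 1 n (n + 1)" using upper1[of n] by simp
  fix y assume "0 < y \<and> hc_property 1 n y"
  then show "n + 1 \<le> y" using lower1[of y n] by (cases "y \<le> n") auto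
qed




definition inI :: "real \<times> real \<Rightarrow> real \<Rightarrow> bool" where
  "inI I v \<longleftrightarrow> fst I \<le> v \<and> v \<le> snd I"

definition pI :: "nat \<Rightarrow> real \<times> real" where
  "pI t = (if t = 0 then (0,1) else if t = 1 then (2,3) else (4,4))"
definition qI :: "nat \<Rightarrow> real \<times> real" where
  "qI t = (if t = 0 then (0,0) else if t = 1 then (1,2) else (3,4))"
definition xI :: "nat \<Rightarrow> real \<times> real" where
  "xI t = (if t = 2 then (2,4) else (0,1))"
definition yI :: "nat \<Rightarrow> real \<times> real" where
  "yI t = (if t = 0 then (0,2) else if t = 1 then (3,4) else (0,4))"

definition ivl :: "nat \<Rightarrow> nat \<Rightarrow> nat \<Rightarrow> real \<times> real" where
  "ivl i t k = (let j = (i - 1) div 3; r = (i - 1) mod 3 in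
     if r = 0 then (if k = j then pI t else (0,4))
     else if r = 1 then (if k = j then qI t else (0,4))
     else (if k = j then xI t else if k = Suc j then yI t else (0,4)))"

definition bx :: "nat \<Rightarrow> nat \<Rightarrow> nat \<Rightarrow> (nat \<Rightarrow> real) set" where
  "bx d i t = {x \<in> euclid d. \<forall>k<d. fst (ivl i t k) \<le> x k \<and> x k \<le> snd (ivl i t k)}"

definition fam :: "nat \<Rightarrow> nat \<Rightarrow> (nat \<Rightarrow> real) set set" where
  "fam d i = bx d i ` {0,1,2}"

lemma ivl_P: "ivl (3*k+1) t k' = (if k' = k then pI t else (0,4))"
  unfolding ivl_def by simp
lemma ivl_Q: "ivl (3*k+2) t k' = (if k' = k then qI t else (0,4))"
proof -
  have "(3*k+2 - 1) div 3 = k" "(3*k+2-1) mod 3 = 1" by (simp_all add: mod_Suc div_Suc)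
  then show ?thesis unfolding ivl_def Let_def by simp
qed
lemma ivl_M: "ivl (3*k+3) t k' = (if k' = k then xI t else if k' = Suc k then yI t else (0,4))"
proof -
  have "(3*k+3 - 1) div 3 = k" "(3*k+3-1) mod 3 = 2" by (simp_all add: mod_Suc)
  then show ?thesis unfolding ivl_def Let_def by simp
qed

lemma ivl_bounds: "0 \<le> fst (ivl i t k) \<and> fst (ivl i t k) \<le> snd (ivl i t k) \<and> snd (ivl i t k) \<le> 4"
  unfolding ivl_def Let_def pI_def qI_def xI_def yI_def by auto

lemma bx_box: "is_box d (bx d i t)"
  unfolding is_box_def bx_def
  by (rule exI[of _ "\<lambda>k. fst (ivl i t k)"], rule exI[of _ "\<lambda>k. snd (ivl i t k)"])
     (simp add: ivl_bounds)

lemma bx_disj: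
  assumes "k < d" "snd (ivl i t k) < fst (ivl i' t' k)"
  shows "bx d i t \<inter> bx d i' t' = {}"
proof (rule ccontr)
  assume "bx d i t \<inter> bx d i' t' \<noteq> {}"
  then obtain x where "x \<in> bx d i t" "x \<in> bx d i' t'" by auto
  then have "x k \<le> snd (ivl i t k)" "fst (ivl i' t' k) \<le> x k" using assms(1) unfolding bx_def by auto
  then show False using assms(2) by simp
qed

lemma idx_cases:
  assumes "1 \<le> (i::nat)"
  obtains k where "i = 3*k+1" | k where "i = 3*k+2" | k where "i = 3*k+3"
proof -
  have e: "i = 3*(i div 3) + i mod 3" by simp
  have "i mod 3 < 3" by simp
  then consider "i mod 3 = 1" | "i mod 3 = 2" | "i mod 3 = 0" by linarith
  then show ?thesis
  proof cases
    case 1 then have "i = 3*(i div 3)+1" using e by simp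
    then show ?thesis using that(1) by blast
  next
    case 2 then have "i = 3*(i div 3)+2" using e by simp
    then show ?thesis using that(2) by blast
  next
    case 3 then have "i = 3*(i div 3 - 1)+3" using e assms by simp
    then show ?thesis using that(3) by blast
  qed
qed

lemma fam_np:
  assumes "1 \<le> i" "i \<le> 3*d - 1"
  shows "\<not> pierceable d 2 (fam d i)"
proof -
  have dis: "bx d i t \<inter> bx d i t' = {}" if "t \<in> {0,1,2::nat}" "t' \<in> {0,1,2}" "t \<noteq> t'" for t t'
  proof -
    from assms(1) show ?thesis
    proof (cases rule: idx_cases)
      case (1 k)
      then have kd: "k < d" using assms(2) by simp
      have "snd (ivl i t k) < fst (ivl i t' k) \<or> snd (ivl i t' k) < fst (ivl i t k)"
        using that unfolding 1 ivl_P pI_def by auto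
      then show ?thesis using bx_disj[OF kd] by (metis inf_commute)
    next
      case (2 k)
      then have kd: "k < d" using assms(2) by simp
      have "snd (ivl i t k) < fst (ivl i t' k) \<or> snd (ivl i t' k) < fst (ivl i t k)"
        using that unfolding 2 ivl_Q qI_def by auto
      then show ?thesis using bx_disj[OF kd] by (metis inf_commute)
    next
      case (3 k)
      then have kd: "Suc k < d" using assms(2) by simp
      show ?thesis
      proof (cases "t = 2 \<or> t' = 2")
        case True
        have "snd (ivl i t k) < fst (ivl i t' k) \<or> snd (ivl i t' k) < fst (ivl i t k)"
          using that True unfolding 3 ivl_M xI_def by auto
        then show ?thesis using bx_disj[of k d] kd by (metis Suc_lessD inf_commute)
      next
        case False
        have "snd (ivl i t (Suc k)) < fst (ivl i t' (Suc k)) \<or> snd (ivl i t' (Suc k)) < fst (ivl i t (Suc k))"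
          using that False unfolding 3 ivl_M yI_def by auto
        then show ?thesis using bx_disj[OF kd] by (metis inf_commute)
      qed
    qed
  qed
  show ?thesis unfolding fam_def
    by (rule disjoint_not_pierceable[of "{0,1,2}" "bx d i"]) (use dis in auto)
qed




definition wit :: "nat \<Rightarrow> nat \<Rightarrow> nat \<Rightarrow> nat \<Rightarrow> real \<times> real \<times> bool" where
  "wit tp tq ty xo = (if tp = 0 then (if tq = 0 then (if ty = 0 then (if xo = 0 then (0, 0, False) else if xo = 1 then (0, 2, True) else (0, 0, False)) else if ty = 1 then (if xo = 0 then (3, 0, True) else if xo = 1 then (3, 0, False) else (3, 0, False)) else (if xo = 0 then (0, 0, False) else if xo = 1 then (0, 2, True) else (0, 0, False))) else if tq = 1 then (if ty = 0 then (if xo = 0 then (0, 1, False) else if xo = 1 then (0, 2, True) else (0, 1, False)) else if ty = 1 then (if xo = 0 then (3, 1, True) else if xo = 1 then (3, 1, False) else (3, 1, False)) else (if xo = 0 then (0, 1, False) else if xo = 1 then (0, 2, True) else (0, 1, False))) else (if ty = 0 then (if xo = 0 then (0, 3, False) else if xo = 1 then (0, 3, True) else (0, 3, False)) else if ty = 1 then (if xo = 0 then (3, 0, True) else if xo = 1 then (3, 0, False) else (3, 0, False)) else (if xo = 0 then (0, 3, False) else if xo = 1 then (0, 3, True) else (0, 3, False)))) else if tp = 1 then (if tq = 0 then (if ty = 0 then (if xo = 0 then (0, 2, False) else if xo = 1 then (0, 2, True) else (0, 2, False)) else if ty = 1 then (if xo = 0 then (3, 0, True) else if xo = 1 then (3,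 0, False) else (3, 0, False)) else (if xo = 0 then (0, 2, False) else if xo = 1 then (0, 2, True) else (0, 2, False))) else if tq = 1 then (if ty = 0 then (if xo = 0 then (0, 2, False) else if xo = 1 then (0, 2, True) else (0, 2, False)) else if ty = 1 then (if xo = 0 then (3, 1, True) else if xo = 1 then (3, 1, False) else (3, 1, False)) else (if xo = 0 then (0, 2, False) else if xo = 1 then (0, 2, True) else (0, 2, False))) else (if ty = 0 then (if xo = 0 then (0, 3, False) else if xo = 1 then (0, 3, True) else (0, 3, False)) else if ty = 1 then (if xo = 0 then (3, 0, True) else if xo = 1 then (3, 0, False) else (3, 0, False)) else (if xo = 0 then (0, 3, False) else if xo = 1 then (0, 3, True) else (0, 3, False)))) else (if tq = 0 then (if ty = 0 then (if xo = 0 then (0, 4, False) else if xo = 1 then (0, 4, True) else (0, 4, False)) else if ty = 1 then (if xo = 0 then (4, 0, True) else if xo = 1 then (4, 0, False) else (4, 0, False)) else (if xo = 0 then (0, 4, False) else if xo = 1 then (0, 4, True) else (0, 4, False))) else if tq = 1 then (if ty = 0 then (if xo = 0 then (1, 4, False) else if xo = 1 then (1, 4, True) else (1, 4, False)) else if ty = 1 then (if xo = 0 then (4, 1, True) else if xo = 1 then (4, 1, False) else (4, 1, False)) else (if xo = 0 then (1, 4, False) else if xo = 1 then (1, 4, True) else (1, 4, False))) else (if ty = 0 then (if xo = 0 then (0, 4, False) else if xo = 1 then (0, 4, True) else (0, 4, False)) else if ty = 1 then (if xo = 0 then (4, 0, True) else if xo = 1 then (3, 4, False) else (3, 4, False))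 else (if xo = 0 then (0, 4, False) else if xo = 1 then (0, 4, True) else (0, 4, False)))))"

definition Xv :: "nat \<Rightarrow> real \<times> real" where
  "Xv xo = (if xo = 0 then (0,1) else if xo = 1 then (2,4) else (0,4))"

lemma loc:
  assumes "tp \<in> {0,1,2::nat}" "tq \<in> {0,1,2::nat}" "ty \<in> {0,1,2::nat}" "xo \<in> {0,1,2::nat}"
  shows "0 \<le> fst (wit tp tq ty xo) \<and> fst (wit tp tq ty xo) \<le> 4 \<and>
    0 \<le> fst (snd (wit tp tq ty xo)) \<and> fst (snd (wit tp tq ty xo)) \<le> 4 \<and>
    inI (yI ty) (fst (wit tp tq ty xo)) \<and>
    inI (Xv xo) (if snd (snd (wit tp tq ty xo)) then fst (snd (wit tp tq ty xo)) else fst (wit tp tq ty xo)) \<and>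
    (inI (pI tp) (fst (wit tp tq ty xo)) \<or> inI (pI tp) (fst (snd (wit tp tq ty xo)))) \<and>
    (inI (qI tq) (fst (wit tp tq ty xo)) \<or> inI (qI tq) (fst (snd (wit tp tq ty xo))))"
  using assms by (auto simp: wit_def inI_def pI_def qI_def yI_def Xv_def)

lemma inI_04: "0 \<le> v \<Longrightarrow> v \<le> 4 \<Longrightarrow> inI (0,4) v"
  unfolding inI_def by simp

lemma trans_pierce:
  assumes t: "\<forall>i\<in>{1..3*d-1}. t i \<in> {0,1,2::nat}"
  shows "pierceable d 2 ((\<lambda>i. bx d i (t i)) ` {1..3*d-1})"
proof -
  define tp where "tp k = t (3*k+1)" for k
  define tq where "tq k = t (3*k+2)" for k
  define ty where "ty k = (if k = 0 then 2 else t (3*k))" for k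
  define xo where "xo k = (if Suc k < d then (if t (3*k+3) = 2 then 1 else 0) else (2::nat))" for k
  define W where "W k = wit (tp k) (tq k) (ty k) (xo k)" for k
  define A where "A k = fst (W k)" for k
  define B where "B k = fst (snd (W k))" for k
  define co where "co k = snd (snd (W k))" for k
  define col where "col = rec_nat False (\<lambda>k c. c \<noteq> co k)"
  have colS: "col (Suc k) = (col k \<noteq> co k)" for k unfolding col_def by simp
  define pnt where "pnt c = (\<lambda>k. if k < d then (if c = col k then A k else B k) else 0)" for c
  have L: "0 \<le> A k \<and> A k \<le> 4 \<and> 0 \<le> B k \<and> B k \<le> 4 \<and> inI (yI (ty k)) (A k) \<and>
      inI (Xv (xo k)) (if co k then B k else A k) \<and>
      (inI (pI (tp k)) (A k) \<or> inI (pI (tp k)) (B k)) \<and>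
      (inI (qI (tq k)) (A k) \<or> inI (qI (tq k)) (B k))" if k: "k < d" for k
  proof -
    have "tp k \<in> {0,1,2}" unfolding tp_def using t k by auto
    moreover have "tq k \<in> {0,1,2}" unfolding tq_def using t k by auto
    moreover have "ty k \<in> {0,1,2}" unfolding ty_def using t k by auto
    moreover have "xo k \<in> {0,1,2}" unfolding xo_def by auto
    ultimately show ?thesis unfolding A_def B_def co_def W_def by (rule loc)
  qed
  have pe: "pnt c \<in> euclid d" for c unfolding euclid_def pnt_def by auto
  have pbd: "inI (0,4) (pnt c k)" if "k < d" for c k
    using L[OF that] unfolding pnt_def inI_def by auto
  have mem: "pnt c \<in> bx d i tt" if "\<forall>k<d. inI (ivl i tt k) (pnt c k)" for c i tt
    using pe that unfolding bx_def inI_def by auto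
  have hit: "\<exists>c. pnt c \<in> bx d i (t i)" if i: "i \<in> {1..3*d-1}" for i
  proof -
    have i1: "1 \<le> i" using i by auto
    from i1 show ?thesis
    proof (cases rule: idx_cases)
      case (1 k)
      then have k: "k < d" using i by auto
      have tk: "t i = tp k" unfolding tp_def 1 by simp
      define c where "c = (if inI (pI (tp k)) (A k) then col k else \<not> col k)"
      have "inI (pI (tp k)) (pnt c k)" using L[OF k] k unfolding c_def pnt_def by auto
      then have "\<forall>k'<d. inI (ivl i (t i) k') (pnt c k')"
        using pbd unfolding 1 ivl_P tk[unfolded 1] by auto
      then show ?thesis using mem by blast
    next
      case (2 k)
      then have k: "k < d" using i by auto
      have tk: "t i = tq k" unfolding tq_def 2 by simp
      define c where "c = (if inI (qI (tq k)) (A k) then col k else \<not> col k)"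
      have "inI (qI (tq k)) (pnt c k)" using L[OF k] k unfolding c_def pnt_def by auto
      then have "\<forall>k'<d. inI (ivl i (t i) k') (pnt c k')"
        using pbd unfolding 2 ivl_Q tk[unfolded 2] by auto
      then show ?thesis using mem by blast
    next
      case (3 k)
      then have k: "Suc k < d" using i by auto
      define c where "c = col (Suc k)"
      have x: "Xv (xo k) = xI (t i)" unfolding xo_def Xv_def xI_def 3 using k by auto
      have y: "ty (Suc k) = t i" unfolding ty_def 3 by (simp add: add.commute)
      have "inI (xI (t i)) (pnt c k)"
        using L[of k] k x unfolding c_def pnt_def colS by (cases "co k") auto
      moreover have "inI (yI (t i)) (pnt c (Suc k))"
        using L[OF k] k y unfolding c_def pnt_def by auto
      ultimately have "\<forall>k'<d. inI (ivl i (t i) k') (pnt c k')"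
        using pbd unfolding 3 ivl_M by auto
      then show ?thesis using mem by blast
    qed
  qed
  show ?thesis unfolding pierceable_def
  proof (rule exI[of _ "{pnt False, pnt True}"], intro conjI)
    show "{pnt False, pnt True} \<subseteq> euclid d" using pe by auto
    show "finite {pnt False, pnt True}" by simp
    show "card {pnt False, pnt True} \<le> 2" by (simp add: card_insert_if)
    show "\<forall>F\<in>(\<lambda>i. bx d i (t i)) ` {1..3*d-1}. F \<inter> {pnt False, pnt True} \<noteq> {}"
    proof
      fix F assume "F \<in> (\<lambda>i. bx d i (t i)) ` {1..3*d-1}"
      then obtain i where i: "i \<in> {1..3*d-1}" "F = bx d i (t i)" by auto
      obtain c where "pnt c \<in> F" using hit[OF i(1)] i(2) by auto
      moreover have "pnt c \<in> {pnt False, pnt True}" by (cases c) auto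
      ultimately show "F \<inter> {pnt False, pnt True} \<noteq> {}" by auto
    qed
  qed
qed




definition tri :: "nat set \<Rightarrow> nat set \<Rightarrow> nat set \<Rightarrow> nat set" where
  "tri s t w = {j. (j \<in> s) \<noteq> ((j \<in> t) \<noteq> (j \<in> w))}"

definition aff :: "nat set set \<Rightarrow> bool" where
  "aff W \<longleftrightarrow> (\<forall>s\<in>W. \<forall>t\<in>W. \<forall>w\<in>W. tri s t w \<in> W)"

lemma tri_cancel: "tri (tri s a b) s a = b"
  unfolding tri_def by auto

lemma tri_inj: "tri s a b = tri s' a b \<Longrightarrow> s = s'"
  unfolding tri_def set_eq_iff by auto

lemma halving:
  assumes "finite W" "aff W" "aff W'" "W' \<subseteq> W" "t0 \<in> W" "t0 \<notin> W'" "s0 \<in> W'"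
  shows "2 * card W' \<le> card W"
proof -
  define h where "h s = tri s s0 t0" for s
  have "inj_on h W'" unfolding h_def by (rule inj_onI) (rule tri_inj)
  moreover have "h ` W' \<subseteq> W - W'"
  proof
    fix x assume "x \<in> h ` W'"
    then obtain s where s: "s \<in> W'" "x = h s" by auto
    have "x \<in> W" using assms(2,4,5,7) s unfolding aff_def h_def by blast
    moreover have "x \<notin> W'"
    proof
      assume "x \<in> W'"
      then have "tri x s s0 \<in> W'" using assms(3,7) s(1) unfolding aff_def by blast
      then show False using assms(6) s(2) unfolding h_def by (simp add: tri_cancel)
    qed
    ultimately show "x \<in> W - W'" by simp
  qed
  moreover have "finite (W - W')" using assms(1) by simp
  ultimately have "card W' \<le> card (W - W')" by (rule card_inj_on_le)
  moreover have "card (W - W') = card W - card W'"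
    using assms(1,4) by (meson card_Diff_subset rev_finite_subset)
  moreover have "card W' \<le> card W" using assms(1,4) by (rule card_mono)
  ultimately show ?thesis by linarith
qed


definition pt :: "nat \<Rightarrow> (nat \<Rightarrow> real) \<Rightarrow> (nat \<Rightarrow> real) \<Rightarrow> nat set \<Rightarrow> nat \<Rightarrow> real" where
  "pt d r l s = (\<lambda>j. if j < d then (if j \<in> s then r j else l j) else 0)"

definition SB :: "nat \<Rightarrow> (nat \<Rightarrow> real) \<Rightarrow> (nat \<Rightarrow> real) \<Rightarrow> (nat \<Rightarrow> real) set \<Rightarrow> nat set set" where
  "SB d r l B = {s \<in> Pow {..<d}. pt d r l s \<in> B \<or> pt d l r s \<in> B}"

lemma pt_euclid: "pt d r l s \<in> euclid d"
  unfolding pt_def euclid_def by auto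

lemma pt_in_box:
  assumes "is_box d B"
  shows "pt d r l s \<in> B \<longleftrightarrow> (\<forall>j<d. if j \<in> s then (lo B j \<le> r j \<and> r j \<le> hi B j) else (lo B j \<le> l j \<and> l j \<le> hi B j))"
  using in_box_iff[OF assms, of "pt d r l s"] pt_euclid[of d r l s] unfolding pt_def by auto

lemma pt_compl: "pt d r l ({..<d} - s) = pt d l r s"
  unfolding pt_def by auto

lemma SB_compl: "s \<in> SB d r l B \<Longrightarrow> {..<d} - s \<in> SB d r l B"
  unfolding SB_def using pt_compl[of d r l s] pt_compl[of d l r s] by auto

lemma xor3:
  fixes a b e c1 c2 c3 U V :: bool
  assumes "if a = c1 then U else V" "if b = c2 then U else V" "if e = c3 then U else V"
  shows "if (a \<noteq> (b \<noteq> e)) = (c1 \<noteq> (c2 \<noteq> c3)) then U else V"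
  using assms by (cases U; cases V; cases a; cases b; cases e; cases c1; cases c2; cases c3) simp_all

lemma tri_E:
  assumes "\<forall>j<d. if (j \<in> s) = c1 then u j else v j"
    "\<forall>j<d. if (j \<in> t) = c2 then u j else v j"
    "\<forall>j<d. if (j \<in> w) = c3 then u j else v j"
  shows "\<forall>j<d. if (j \<in> tri s t w) = (c1 \<noteq> (c2 \<noteq> c3)) then u j else v j"
proof (intro allI impI)
  fix j assume j: "j < d"
  have a: "if (j \<in> s) = c1 then u j else v j" using assms(1) j by blast
  have b: "if (j \<in> t) = c2 then u j else v j" using assms(2) j by blast
  have c: "if (j \<in> w) = c3 then u j else v j" using assms(3) j by blast
  show "if (j \<in> tri s t w) = (c1 \<noteq> (c2 \<noteq> c3)) then u j else v j"
    using xor3[OF a b c] unfolding tri_def by simp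
qed

lemma aff_SB:
  assumes "is_box d B"
  shows "aff (SB d r l B)"
proof -
  define u where "u j = (lo B j \<le> r j \<and> r j \<le> hi B j)" for j
  define v where "v j = (lo B j \<le> l j \<and> l j \<le> hi B j)" for j
  define E where "E s c = (\<forall>j<d. if (j \<in> s) = c then u j else v j)" for s c
  have P: "pt d r l s \<in> B \<longleftrightarrow> E s True" for s
    unfolding pt_in_box[OF assms] E_def u_def v_def by simp
  have Q: "pt d l r s \<in> B \<longleftrightarrow> E s False" for s
    unfolding pt_in_box[OF assms] E_def u_def v_def by (simp add: if_bool_eq_conj) (auto split: if_splits)
  have mem: "s \<in> SB d r l B \<longleftrightarrow> s \<subseteq> {..<d} \<and> (\<exists>c. E s c)" for s
    unfolding SB_def using P Q by (simp add: ex_bool_eq)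
  show ?thesis unfolding aff_def
  proof (intro ballI)
    fix s t w assume st: "s \<in> SB d r l B" "t \<in> SB d r l B" "w \<in> SB d r l B"
    then obtain c1 c2 c3 where e: "E s c1" "E t c2" "E w c3" and sub: "s \<subseteq> {..<d}" "t \<subseteq> {..<d}" "w \<subseteq> {..<d}"
      using mem by meson
    have "E (tri s t w) (c1 \<noteq> (c2 \<noteq> c3))" using tri_E e unfolding E_def by blast
    moreover have "tri s t w \<subseteq> {..<d}" using sub unfolding tri_def by auto
    ultimately show "tri s t w \<in> SB d r l B" using mem by blast
  qed
qed

lemma card_ge2:
  fixes s :: "nat set"
  assumes "1 \<le> d" "finite W" "s \<in> W" "{..<d} - s \<in> W"
  shows "2 \<le> card W"
proof -
  have "s \<noteq> {..<d} - s"
  proof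
    assume eq: "s = {..<d} - s"
    have "0 \<in> s \<longleftrightarrow> 0 \<in> {..<d} - s" using eq by simp
    then show False using assms(1) by auto
  qed
  then have "card {s, {..<d} - s} = 2" by simp
  moreover have "{s, {..<d} - s} \<subseteq> W" using assms by auto
  ultimately show ?thesis using card_mono[OF assms(2)] by metis
qed




definition ZZ :: "(nat \<Rightarrow> 'a set set) \<Rightarrow> nat set \<Rightarrow> nat set \<Rightarrow> (nat \<Rightarrow> 'a set) \<Rightarrow> 'a set set" where
  "ZZ F Col U g = g ` U \<union> \<Union> (F ` (Col - U))"

lemma pole_step:
  fixes \<phi> :: "'a set \<Rightarrow> real"
  assumes "finite Col" "\<forall>c\<in>Col. finite (F c)" "U \<subseteq> Col" "\<forall>c\<in>U. g c \<in> F c" "ZZ F Col U g \<noteq> {}"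
  shows "\<exists>U' g' X. U \<subseteq> U' \<and> U' \<subseteq> Col \<and> card U' \<le> Suc (card U) \<and> (\<forall>c\<in>U'. g' c \<in> F c) \<and>
    g ` U \<subseteq> g' ` U' \<and> ZZ F Col U' g' \<subseteq> ZZ F Col U g \<and> X \<in> g' ` U' \<and> (\<forall>B\<in>ZZ F Col U g. \<phi> X \<le> \<phi> B)"
proof -
  let ?Z = "ZZ F Col U g"
  have finU: "finite U" using assms(1,3) finite_subset by blast
  have finZ: "finite ?Z" unfolding ZZ_def using assms(1,2) finU by auto
  define m where "m = Min (\<phi> ` ?Z)"
  have "m \<in> \<phi> ` ?Z" unfolding m_def using finZ assms(5) by (intro Min_in) auto
  then obtain X where X: "X \<in> ?Z" "\<phi> X = m" by auto
  have mle: "\<forall>B\<in>?Z. \<phi> X \<le> \<phi> B" using X(2) finZ unfolding m_def by auto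
  show ?thesis
  proof (cases "X \<in> g ` U")
    case True
    show ?thesis
      by (rule exI[of _ U], rule exI[of _ g], rule exI[of _ X]) (use assms(3,4) mle True in auto)
  next
    case False
    then obtain c where c: "c \<in> Col" "c \<notin> U" "X \<in> F c" using X(1) unfolding ZZ_def by auto
    define g' where "g' = g(c := X)"
    have gU: "g' ` U = g ` U" unfolding g'_def using c(2) by auto
    have gi: "g' ` insert c U = insert X (g ` U)" using gU unfolding g'_def by auto
    have card: "card (insert c U) \<le> Suc (card U)" using finU by (simp add: card_insert_if)
    have sub: "ZZ F Col (insert c U) g' \<subseteq> ?Z"
    proof
      fix B assume "B \<in> ZZ F Col (insert c U) g'"
      then have "B \<in> insert X (g ` U) \<or> B \<in> \<Union> (F ` (Col - insert c U))" unfolding ZZ_def gi by auto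
      then show "B \<in> ?Z"
      proof
        assume "B \<in> insert X (g ` U)"
        then show ?thesis using X(1) unfolding ZZ_def by auto
      next
        assume "B \<in> \<Union> (F ` (Col - insert c U))"
        then show ?thesis unfolding ZZ_def by auto
      qed
    qed
    have g'F: "\<forall>c'\<in>insert c U. g' c' \<in> F c'" using assms(4) c unfolding g'_def by auto
    show ?thesis
      by (rule exI[of _ "insert c U"], rule exI[of _ g'], rule exI[of _ X])
         (use assms(3) c card g'F gU sub mle gi in auto)
  qed
qed

lemma zz_ne:
  assumes "finite Col" "\<forall>c\<in>Col. F c \<noteq> {}" "U \<subseteq> Col" "card U < card Col"
  shows "ZZ F Col U g \<noteq> {}"
proof -
  have "\<not> Col \<subseteq> U"
  proof
    assume "Col \<subseteq> U"
    then have "card Col \<le> card U" using assms(1,3) by (metis card_mono finite_subset)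
    then show False using assms(4) by simp
  qed
  then obtain c where c: "c \<in> Col" "c \<notin> U" by auto
  then obtain B where "B \<in> F c" using assms(2) by auto
  then have "B \<in> ZZ F Col U g" unfolding ZZ_def using c by auto
  then show ?thesis by auto
qed

lemma poles:
  assumes fin: "finite Col" and F: "\<forall>c\<in>Col. finite (F c) \<and> F c \<noteq> {}" and mk: "m \<le> k" and k: "2*k \<le> card Col"
  shows "\<exists>U g R L. U \<subseteq> Col \<and> card U \<le> 2*m \<and> (\<forall>c\<in>U. g c \<in> F c) \<and>
    (\<forall>j<m. R j \<in> g ` U \<and> L j \<in> g ` U \<and> (\<forall>B\<in>ZZ F Col U g. hi (R j) j \<le> hi B j \<and> lo B j \<le> lo (L j) j))"
  using mk
proof (induction m)
  case 0
  show ?case by (rule exI[of _ "{}"]) auto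
next
  case (Suc m)
  then have "m \<le> k" by simp
  from Suc.IH[OF this] obtain U g R L where U: "U \<subseteq> Col" "card U \<le> 2*m" "\<forall>c\<in>U. g c \<in> F c"
    "\<forall>j<m. R j \<in> g ` U \<and> L j \<in> g ` U \<and> (\<forall>B\<in>ZZ F Col U g. hi (R j) j \<le> hi B j \<and> lo B j \<le> lo (L j) j)"
    by (elim exE conjE) blast
  have Ff: "\<forall>c\<in>Col. finite (F c)" and Fne: "\<forall>c\<in>Col. F c \<noteq> {}" using F by auto
  have "ZZ F Col U g \<noteq> {}" using zz_ne[OF fin Fne U(1)] U(2) Suc.prems k by simp
  from pole_step[OF fin Ff U(1) U(3) this, of "\<lambda>B. hi B m"]
  obtain U1 g1 X1 where S1: "U \<subseteq> U1" "U1 \<subseteq> Col" "card U1 \<le> Suc (card U)" "\<forall>c\<in>U1. g1 c \<in> F c"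
    "g ` U \<subseteq> g1 ` U1" "ZZ F Col U1 g1 \<subseteq> ZZ F Col U g" "X1 \<in> g1 ` U1"
    "\<forall>B\<in>ZZ F Col U g. hi X1 m \<le> hi B m"
    by (elim exE conjE) blast
  have "ZZ F Col U1 g1 \<noteq> {}" using zz_ne[OF fin Fne S1(2)] S1(3) U(2) Suc.prems k by simp
  from pole_step[OF fin Ff S1(2) S1(4) this, of "\<lambda>B. - lo B m"]
  obtain U2 g2 X2 where S2: "U1 \<subseteq> U2" "U2 \<subseteq> Col" "card U2 \<le> Suc (card U1)" "\<forall>c\<in>U2. g2 c \<in> F c"
    "g1 ` U1 \<subseteq> g2 ` U2" "ZZ F Col U2 g2 \<subseteq> ZZ F Col U1 g1" "X2 \<in> g2 ` U2"
    "\<forall>B\<in>ZZ F Col U1 g1. - lo X2 m \<le> - lo B m"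
    by (elim exE conjE) blast
  define R' where "R' = R(m := X1)"
  define L' where "L' = L(m := X2)"
  have "\<forall>j<Suc m. R' j \<in> g2 ` U2 \<and> L' j \<in> g2 ` U2 \<and>
      (\<forall>B\<in>ZZ F Col U2 g2. hi (R' j) j \<le> hi B j \<and> lo B j \<le> lo (L' j) j)"
  proof (intro allI impI)
    fix j assume j: "j < Suc m"
    show "R' j \<in> g2 ` U2 \<and> L' j \<in> g2 ` U2 \<and>
      (\<forall>B\<in>ZZ F Col U2 g2. hi (R' j) j \<le> hi B j \<and> lo B j \<le> lo (L' j) j)"
    proof (cases "j = m")
      case True
      have "\<forall>B\<in>ZZ F Col U2 g2. hi X1 m \<le> hi B m \<and> lo B m \<le> lo X2 m"
        using S1(6,8) S2(6,8) by force
      then show ?thesis using True S1(7) S2(5,7) unfolding R'_def L'_def by auto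
    next
      case False
      then have jm: "j < m" using j by simp
      then have "R j \<in> g ` U" "L j \<in> g ` U"
        "\<forall>B\<in>ZZ F Col U g. hi (R j) j \<le> hi B j \<and> lo B j \<le> lo (L j) j" using U(4) by auto
      moreover have "ZZ F Col U2 g2 \<subseteq> ZZ F Col U g" using S1(6) S2(6) by auto
      moreover have "g ` U \<subseteq> g2 ` U2" using S1(5) S2(5) by auto
      ultimately show ?thesis using False unfolding R'_def L'_def by auto
    qed
  qed
  moreover have "card U2 \<le> 2 * Suc m" using S1(3) S2(3) U(2) by simp
  ultimately show ?case using S2(2,4) by blast
qed




definition WW :: "nat \<Rightarrow> (nat \<Rightarrow> real) \<Rightarrow> (nat \<Rightarrow> real) \<Rightarrow> (nat \<Rightarrow> (nat \<Rightarrow> real) set) \<Rightarrow> nat set \<Rightarrow> nat set set" where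
  "WW d r l f K = {s \<in> Pow {..<d}. \<forall>c\<in>K. s \<in> SB d r l (f c)}"

lemma aff_WW:
  assumes "\<forall>c\<in>K. is_box d (f c)"
  shows "aff (WW d r l f K)"
  unfolding aff_def
proof (intro ballI)
  fix s t w assume st: "s \<in> WW d r l f K" "t \<in> WW d r l f K" "w \<in> WW d r l f K"
  have "tri s t w \<subseteq> {..<d}" using st unfolding WW_def tri_def by auto
  moreover have "\<forall>c\<in>K. tri s t w \<in> SB d r l (f c)"
  proof
    fix c assume c: "c \<in> K"
    have "aff (SB d r l (f c))" using assms c by (intro aff_SB) auto
    moreover have "s \<in> SB d r l (f c)" "t \<in> SB d r l (f c)" "w \<in> SB d r l (f c)"
      using st c unfolding WW_def by auto
    ultimately show "tri s t w \<in> SB d r l (f c)" unfolding aff_def by blast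
  qed
  ultimately show "tri s t w \<in> WW d r l f K" unfolding WW_def by auto
qed

lemma WW_compl: "s \<in> WW d r l f K \<Longrightarrow> {..<d} - s \<in> WW d r l f K"
  unfolding WW_def using SB_compl by auto

lemma WW_finite: "finite (WW d r l f K)"
  unfolding WW_def by (rule finite_subset[of _ "Pow {..<d}"]) auto

lemma greedy:
  assumes "finite K" "\<forall>c\<in>K. (\<forall>B\<in>F c. is_box d B) \<and> \<not> pierceable d 2 (F c)"
  shows "\<exists>f. (\<forall>c\<in>K. f c \<in> F c) \<and> card (WW d r l f K) * 2 ^ card K \<le> 2 ^ d"
  using assms
proof (induction K rule: finite_induct)
  case empty
  have "WW d r l f {} = Pow {..<d}" for f unfolding WW_def by auto
  then show ?case by (simp add: card_Pow)
next
  case (insert c K)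
  have "\<forall>c\<in>K. (\<forall>B\<in>F c. is_box d B) \<and> \<not> pierceable d 2 (F c)" using insert.prems by auto
  from insert.IH[OF this] obtain f where f: "\<forall>c\<in>K. f c \<in> F c" "card (WW d r l f K) * 2 ^ card K \<le> 2 ^ d"
    by (elim exE conjE) blast
  have Fc: "\<forall>B\<in>F c. is_box d B" "\<not> pierceable d 2 (F c)" using insert.prems by auto
  have cK: "card (insert c K) = Suc (card K)" using insert.hyps by simp
  let ?W = "WW d r l f K"
  show ?case
  proof (cases "?W = {}")
    case True
    have "F c \<noteq> {}" using Fc(2) empty_pierceable by metis
    then obtain B0 where B0: "B0 \<in> F c" by auto
    define f' where "f' = f(c := B0)"
    have "WW d r l f' (insert c K) \<subseteq> ?W"
      unfolding WW_def f'_def using insert.hyps(2) by (auto split: if_splits)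
    then have "WW d r l f' (insert c K) = {}" using True by auto
    moreover have "\<forall>c'\<in>insert c K. f' c' \<in> F c'" using f(1) B0 unfolding f'_def by auto
    ultimately show ?thesis by (intro exI[of _ f']) simp
  next
    case False
    then obtain s where s: "s \<in> ?W" by auto
    have "\<exists>B\<in>F c. B \<inter> {pt d r l s, pt d l r s} = {}"
    proof (rule ccontr)
      assume "\<not> ?thesis"
      then have "\<forall>B\<in>F c. B \<inter> {pt d r l s, pt d l r s} \<noteq> {}" by auto
      moreover have "{pt d r l s, pt d l r s} \<subseteq> euclid d" using pt_euclid by auto
      moreover have "card {pt d r l s, pt d l r s} \<le> 2" by (simp add: card_insert_if)
      ultimately have "pierceable d 2 (F c)" unfolding pierceable_def
        by (intro exI[of _ "{pt d r l s, pt d l r s}"]) simp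
      then show False using Fc(2) by simp
    qed
    then obtain B where B: "B \<in> F c" "B \<inter> {pt d r l s, pt d l r s} = {}" by auto
    define f' where "f' = f(c := B)"
    let ?W' = "WW d r l f' (insert c K)"
    have f'F: "\<forall>c'\<in>insert c K. f' c' \<in> F c'" using f(1) B(1) unfolding f'_def by auto
    have boxes: "\<forall>c'\<in>insert c K. is_box d (f' c')" using f'F insert.prems by blast
    have sub: "?W' \<subseteq> ?W" unfolding WW_def f'_def using insert.hyps(2) by (auto split: if_splits)
    have notin: "s \<notin> ?W'"
    proof
      assume "s \<in> ?W'"
      then have "s \<in> SB d r l B" unfolding WW_def f'_def by auto
      then show False using B(2) unfolding SB_def by auto
    qed
    show ?thesis
    proof (cases "?W' = {}")
      case True
      then show ?thesis using f'F by (intro exI[of _ f']) simp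
    next
      case False
      then obtain s0 where s0: "s0 \<in> ?W'" by auto
      have "aff ?W" using f(1) insert.prems by (intro aff_WW) auto
      moreover have "aff ?W'" using boxes by (rule aff_WW)
      ultimately have "2 * card ?W' \<le> card ?W"
        using halving[OF WW_finite _ _ sub s notin s0] by simp
      then have "card ?W' * 2 ^ card (insert c K) \<le> card ?W * 2 ^ card K"
        unfolding cK by simp
      then have "card ?W' * 2 ^ card (insert c K) \<le> 2 ^ d" using f(2) by linarith
      then show ?thesis using f'F by (intro exI[of _ f']) simp
    qed
  qed
qed




lemma two_points:
  assumes "finite A" "card A \<le> 2"
  shows "\<exists>p q. A \<subseteq> {p, q}"
proof (cases "A = {}")
  case True then show ?thesis by auto
next
  case False
  then obtain p where p: "p \<in> A" by auto
  have c: "card (A - {p}) \<le> Suc 0" using assms p by (simp add: card_Diff_singleton)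
  have fin: "finite (A - {p})" using assms(1) by simp
  show ?thesis
  proof (cases "A - {p} = {}")
    case True then show ?thesis by auto
  next
    case False
    then obtain q where q: "q \<in> A - {p}" by auto
    have "\<forall>a\<in>A - {p}. \<forall>b\<in>A - {p}. a = b" using c card_le_Suc0_iff_eq[OF fin] by blast
    then have "A - {p} \<subseteq> {q}" using q by blast
    then show ?thesis by auto
  qed
qed

lemma coordP:
  fixes pj qj r l loB hiB :: real
  assumes "pR \<or> qR" "pL \<or> qL" "pR \<Longrightarrow> pj \<le> r" "qR \<Longrightarrow> qj \<le> r" "pL \<Longrightarrow> l \<le> pj" "qL \<Longrightarrow> l \<le> qj"
    "r \<le> hiB" "loB \<le> l" "loB \<le> pj" "pj \<le> hiB"
  shows "if pj \<le> r then (loB \<le> r \<and> r \<le> hiB) else (loB \<le> l \<and> l \<le> hiB)"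
proof (cases "pj \<le> r")
  case True then show ?thesis using assms by simp
next
  case False
  have "l \<le> hiB"
  proof (cases pL)
    case True then show ?thesis using assms by simp
  next
    case False
    then have "qL" using assms(2) by simp
    moreover have "\<not> pR" using \<open>\<not> pj \<le> r\<close> assms(3) by auto
    then have "qR" using assms(1) by simp
    ultimately show ?thesis using assms by force
  qed
  then show ?thesis using False assms by simp
qed

lemma coordQ:
  fixes pj qj r l loB hiB :: real
  assumes "pR \<or> qR" "pL \<or> qL" "pR \<Longrightarrow> pj \<le> r" "qR \<Longrightarrow> qj \<le> r" "pL \<Longrightarrow> l \<le> pj" "qL \<Longrightarrow> l \<le> qj"
    "r \<le> hiB" "loB \<le> l" "loB \<le> qj" "qj \<le> hiB"
  shows "if pj \<le> r then (loB \<le> l \<and> l \<le> hiB) else (loB \<le> r \<and> r \<le> hiB)"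
proof (cases "pj \<le> r")
  case True
  have "l \<le> hiB"
  proof (cases qL)
    case True then show ?thesis using assms by force
  next
    case False
    then have "pL" using assms(2) by simp
    then show ?thesis using assms \<open>pj \<le> r\<close> by force
  qed
  then show ?thesis using True assms by simp
next
  case False
  then have "\<not> pR" using assms(3) by auto
  then have "qR" using assms(1) by simp
  then have "loB \<le> r" using assms by force
  then show ?thesis using False assms by simp
qed


lemma upper2:
  assumes d1: "1 \<le> d"
  shows "hc_property d 2 (3*d)"
  unfolding hc_property_def
proof (intro allI impI)
  fix F :: "nat \<Rightarrow> (nat \<Rightarrow> real) set set"
  assume H: "(\<forall>i\<in>{1..3*d}. finite (F i) \<and> (\<forall>B\<in>F i. is_box d B)) \<and>
    (\<forall>C. colorful F (3*d) (3*d) C \<longrightarrow> pierceable d 2 (C ` {1..3*d}))"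
  show "\<exists>i\<in>{1..3*d}. pierceable d 2 (F i)"
  proof (rule ccontr)
    assume np: "\<not> ?thesis"
    define Col where "Col = {1..3*d}"
    have finCol: "finite Col" unfolding Col_def by simp
    have cardCol: "card Col = 3*d" unfolding Col_def by simp
    have Fnp: "\<forall>c\<in>Col. \<not> pierceable d 2 (F c)" using np unfolding Col_def by auto
    have Fne: "\<forall>c\<in>Col. F c \<noteq> {}" using Fnp empty_pierceable by metis
    have Fbox: "\<forall>c\<in>Col. \<forall>B\<in>F c. is_box d B" using H unfolding Col_def by auto
    have Ffin: "\<forall>c\<in>Col. finite (F c) \<and> F c \<noteq> {}" using H Fne unfolding Col_def by auto
    from poles[OF finCol Ffin order_refl[of d]] cardCol
    obtain U g R L where U: "U \<subseteq> Col" "card U \<le> 2*d" "\<forall>c\<in>U. g c \<in> F c"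
      "\<forall>j<d. R j \<in> g ` U \<and> L j \<in> g ` U \<and> (\<forall>B\<in>ZZ F Col U g. hi (R j) j \<le> hi B j \<and> lo B j \<le> lo (L j) j)"
      by (auto elim!: exE)
    define r where "r j = hi (R j) j" for j
    define l where "l j = lo (L j) j" for j
    have finU: "finite U" using U(1) finCol finite_subset by blast
    have "card (Col - U) = card Col - card U" using U(1) finU by (simp add: card_Diff_subset)
    then have "d \<le> card (Col - U)" using cardCol U(2) by simp
    then obtain K where K: "K \<subseteq> Col - U" "card K = d" by (meson obtain_subset_with_card_n)
    have finK: "finite K" using K(1) finCol finite_subset by blast
    have "\<forall>c\<in>K. (\<forall>B\<in>F c. is_box d B) \<and> \<not> pierceable d 2 (F c)" using K(1) Fbox Fnp by auto
    from greedy[OF finK this, of r l] obtain f where f: "\<forall>c\<in>K. f c \<in> F c"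
      "card (WW d r l f K) * 2 ^ card K \<le> 2 ^ d" by (elim exE conjE) blast
    have Wempty: "WW d r l f K = {}"
    proof (rule ccontr)
      assume "WW d r l f K \<noteq> {}"
      then obtain s where s: "s \<in> WW d r l f K" by auto
      have "2 \<le> card (WW d r l f K)" using card_ge2[OF d1 WW_finite s WW_compl[OF s]] .
      moreover have "card (WW d r l f K) \<le> 1" using f(2) K(2) by simp
      ultimately show False by simp
    qed
    define C where "C i = (if i \<in> U then g i else if i \<in> K then f i else (SOME B. B \<in> F i))" for i
    have CF: "\<forall>i\<in>Col. C i \<in> F i"
    proof
      fix i assume i: "i \<in> Col"
      show "C i \<in> F i"
      proof (cases "i \<in> U")
        case True then show ?thesis using U(3) unfolding C_def by simp
      next
        case False
        show ?thesis
        proof (cases "i \<in> K")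
          case True then show ?thesis using f(1) False unfolding C_def by simp
        next
          case False
          have "(SOME B. B \<in> F i) \<in> F i" using Fne i by (simp add: some_in_eq)
          then show ?thesis using False \<open>i \<notin> U\<close> unfolding C_def by simp
        qed
      qed
    qed
    have "colorful F (3*d) (3*d) C" using CF unfolding Col_def by (intro colorful_id) auto
    then have "pierceable d 2 (C ` Col)" using H unfolding Col_def by auto
    then obtain A where A: "finite A" "card A \<le> 2" "\<forall>B\<in>C ` Col. B \<inter> A \<noteq> {}"
      unfolding pierceable_def by auto
    obtain p q where pq: "A \<subseteq> {p, q}" using two_points[OF A(1,2)] by auto
    have hit: "p \<in> B \<or> q \<in> B" if "B \<in> C ` Col" for B using A(3) pq that by blast
    have TZ: "C ` Col \<subseteq> ZZ F Col U g"
    proof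
      fix B assume "B \<in> C ` Col"
      then obtain i where i: "i \<in> Col" "B = C i" by auto
      show "B \<in> ZZ F Col U g"
      proof (cases "i \<in> U")
        case True then show ?thesis using i unfolding C_def ZZ_def by simp
      next
        case False then show ?thesis using i CF unfolding ZZ_def by auto
      qed
    qed
    have gT: "g ` U \<subseteq> C ` Col"
    proof
      fix B assume "B \<in> g ` U"
      then obtain i where "i \<in> U" "B = g i" by auto
      then show "B \<in> C ` Col" using U(1) unfolding C_def by (intro image_eqI[of _ _ i]) auto
    qed
    have fT: "f c \<in> C ` Col" if "c \<in> K" for c
      using that K(1) unfolding C_def by (intro image_eqI[of _ _ c]) auto
    have Tbox: "is_box d B" if "B \<in> C ` Col" for B using that CF Fbox by auto
    define s where "s = {j. j < d \<and> p j \<le> r j}"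
    have "s \<in> WW d r l f K"
      unfolding WW_def
    proof (intro CollectI conjI ballI)
      show "s \<in> Pow {..<d}" unfolding s_def by auto
      fix c assume c: "c \<in> K"
      define B where "B = f c"
      have BT: "B \<in> C ` Col" unfolding B_def using fT c by simp
      have Bb: "is_box d B" using Tbox BT by simp
      have facts: "(p \<in> R j \<or> q \<in> R j) \<and> (p \<in> L j \<or> q \<in> L j) \<and>
          (p \<in> R j \<longrightarrow> p j \<le> r j) \<and> (q \<in> R j \<longrightarrow> q j \<le> r j) \<and>
          (p \<in> L j \<longrightarrow> l j \<le> p j) \<and> (q \<in> L j \<longrightarrow> l j \<le> q j) \<and>
          r j \<le> hi B j \<and> lo B j \<le> l j" if j: "j < d" for j
      proof -
        have RT: "R j \<in> C ` Col" "L j \<in> C ` Col" using U(4) j gT by auto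
        have e: "hi (R j) j \<le> hi B j \<and> lo B j \<le> lo (L j) j" using U(4) j BT TZ by blast
        have "p \<in> R j \<or> q \<in> R j" "p \<in> L j \<or> q \<in> L j" using hit RT by auto
        moreover have "x \<in> R j \<Longrightarrow> x j \<le> r j" for x
          using in_box_iff[OF Tbox[OF RT(1)]] j unfolding r_def by auto
        moreover have "x \<in> L j \<Longrightarrow> l j \<le> x j" for x
          using in_box_iff[OF Tbox[OF RT(2)]] j unfolding l_def by auto
        ultimately show ?thesis using e unfolding r_def l_def by blast
      qed
      have "p \<in> B \<or> q \<in> B" using hit BT by simp
      then show "s \<in> SB d r l (f c)"
      proof
        assume pB: "p \<in> B"
        have "\<forall>j<d. if j \<in> s then (lo B j \<le> r j \<and> r j \<le> hi B j) else (lo B j \<le> l j \<and> l j \<le> hi B j)"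
        proof (intro allI impI)
          fix j assume j: "j < d"
          have pb: "lo B j \<le> p j" "p j \<le> hi B j" using in_box_iff[OF Bb] pB j by auto
          have "if p j \<le> r j then (lo B j \<le> r j \<and> r j \<le> hi B j) else (lo B j \<le> l j \<and> l j \<le> hi B j)"
            using facts[OF j] pb by (intro coordP[where pR="p \<in> R j" and qR="q \<in> R j" and pL="p \<in> L j" and qL="q \<in> L j" and qj="q j"]) auto
          then show "if j \<in> s then (lo B j \<le> r j \<and> r j \<le> hi B j) else (lo B j \<le> l j \<and> l j \<le> hi B j)"
            unfolding s_def using j by simp
        qed
        then have "pt d r l s \<in> B" using pt_in_box[OF Bb] by simp
        then show ?thesis unfolding SB_def B_def s_def by auto
      next
        assume qB: "q \<in> B"
        have "\<forall>j<d. if j \<in> s then (lo B j \<le> l j \<and> l j \<le> hi B j) else (lo B j \<le> r j \<and> r j \<le> hi B j)"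
        proof (intro allI impI)
          fix j assume j: "j < d"
          have qb: "lo B j \<le> q j" "q j \<le> hi B j" using in_box_iff[OF Bb] qB j by auto
          have "if p j \<le> r j then (lo B j \<le> l j \<and> l j \<le> hi B j) else (lo B j \<le> r j \<and> r j \<le> hi B j)"
            using facts[OF j] qb by (intro coordQ[where pR="p \<in> R j" and qR="q \<in> R j" and pL="p \<in> L j" and qL="q \<in> L j"]) auto
          then show "if j \<in> s then (lo B j \<le> l j \<and> l j \<le> hi B j) else (lo B j \<le> r j \<and> r j \<le> hi B j)"
            unfolding s_def using j by simp
        qed
        then have "pt d l r s \<in> B" using pt_in_box[OF Bb] by simp
        then show ?thesis unfolding SB_def B_def s_def by auto
      qed
    qed
    then show False using Wempty by simp
  qed
qed




lemma lower2:
  assumes "1 \<le> h" "h \<le> 3*d - 1"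
  shows "\<not> hc_property d 2 h"
proof
  assume H: "hc_property d 2 h"
  have "(\<forall>i\<in>{1..h}. finite (fam d i) \<and> (\<forall>B\<in>fam d i. is_box d B))"
    unfolding fam_def using bx_box by auto
  moreover have "\<forall>C. colorful (fam d) h h C \<longrightarrow> pierceable d 2 (C ` {1..h})"
  proof (intro allI impI)
    fix C assume "colorful (fam d) h h C"
    then obtain \<sigma> where \<sigma>: "inj_on \<sigma> {1..h}" "\<sigma> ` {1..h} \<subseteq> {1..h}" "\<forall>j\<in>{1..h}. C j \<in> fam d (\<sigma> j)"
      unfolding colorful_def by blast
    define g where "g i = (if i \<in> \<sigma> ` {1..h} then C (inv_into {1..h} \<sigma> i) else bx d i 0)" for i
    have gf: "g i \<in> fam d i" for i
    proof (cases "i \<in> \<sigma> ` {1..h}")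
      case True
      then obtain j where j: "j \<in> {1..h}" "i = \<sigma> j" by auto
      then have "inv_into {1..h} \<sigma> i = j" using \<sigma>(1) by (simp add: inv_into_f_f)
      then show ?thesis using True j \<sigma>(3) unfolding g_def by simp
    next
      case False then show ?thesis unfolding g_def fam_def by simp
    qed
    define t where "t i = (SOME tt. tt \<in> {0,1,2::nat} \<and> g i = bx d i tt)" for i
    have t: "t i \<in> {0,1,2} \<and> g i = bx d i (t i)" for i
    proof -
      have "\<exists>tt. tt \<in> {0,1,2::nat} \<and> g i = bx d i tt" using gf[of i] unfolding fam_def by auto
      then show ?thesis unfolding t_def by (rule someI_ex)
    qed
    have P: "pierceable d 2 ((\<lambda>i. bx d i (t i)) ` {1..3*d-1})" using t by (intro trans_pierce) auto
    have "C ` {1..h} \<subseteq> (\<lambda>i. bx d i (t i)) ` {1..3*d-1}"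
    proof
      fix B assume "B \<in> C ` {1..h}"
      then obtain j where j: "j \<in> {1..h}" "B = C j" by auto
      have sj: "\<sigma> j \<in> {1..h}" using \<sigma>(2) j(1) by blast
      have "g (\<sigma> j) = C j" using \<sigma>(1) j unfolding g_def by (simp add: inv_into_f_f)
      then have "B = bx d (\<sigma> j) (t (\<sigma> j))" using t[of "\<sigma> j"] j by simp
      moreover have "\<sigma> j \<in> {1..3*d-1}" using sj assms(2) by auto
      ultimately show "B \<in> (\<lambda>i. bx d i (t i)) ` {1..3*d-1}" by blast
    qed
    then show "pierceable d 2 (C ` {1..h})" using P by (rule pierceable_mono[rotated])
  qed
  ultimately obtain i where i: "i \<in> {1..h}" "pierceable d 2 (fam d i)"
    using H unfolding hc_property_def by blast
  moreover have "\<not> pierceable d 2 (fam d i)" using i(1) assms(2) by (intro fam_np) auto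
  ultimately show False by simp
qed

lemma hc2: assumes "1 \<le> d" shows "hc d 2 = 3 * d"
  unfolding hc_def
proof (rule Least_equality)
  show "0 < 3 * d \<and> hc_property d 2 (3 * d)" using upper2[OF assms] assms by simp
  fix y assume "0 < y \<and> hc_property d 2 y"
  then show "3 * d \<le> y" using lower2[of y d] by (cases "y \<le> 3*d - 1") auto
qed

theorem theorem4:
  shows "(\<forall>n::nat. n \<ge> 1 \<longrightarrow> hc 1 n = n + 1) \<and> (\<forall>d::nat. d \<ge> 1 \<longrightarrow> hc d 2 = 3 * d)"
  using hc1 hc2 by auto


end
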